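(* Let $P\subset\mathbb R^d$ be a full-dimensional polytope which is $\mathbb Z$-$\Delta_d$-free. Then $P$ is inclusion-maximal among $\mathbb Z$-$\Delta_d$-free convex bodies if and only if every facet of $P$ is $\mathbb Z$-$\Delta_d$-locked.
   Context: $\Delta_d=\mathrm{conv}(\mathbf 0,e_1,\dots,e_d)$ is the standard simplex. A $\mathbb Z$-unimodular copy of $X$ is $T(X)$ where $T(x)=Mx+b$, $M\in\mathrm{GL}_d(\mathbb Z)$, $b\in\mathbb Z^d$. A convex set is $\mathbb Z$-$\Delta_d$-free if its relative interior contains no $\mathbb Z$-unimodular copy of $\Delta_d$. A facet $F$ of a full-dimensional polytope $P$ is $\mathbb Z$-$\Delta_d$-locked if there is a $\mathbb Z$-unimodular copy $T$ of $\Delta_d$ with $T\subset P$, $T\cap\mathrm{relint}(F)\neq\emptyset$, and $V(T)\setminus\mathrm{relint}(F)\subset\mathrm{int}(P)$, where $V(T)$ is the vertex set of $T$. *)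

theory Defs
  imports "HOL-Analysis.Analysis"
begin

text \<open>Ambient space R^d is real^'n with d = CARD('n).\<close>

definition std_simplex :: "(real^'n) set" where
  "std_simplex = convex hull (insert 0 (range (\<lambda>i. axis i 1)))"

definition int_vec :: "real^'n \<Rightarrow> bool" where
  "int_vec b \<longleftrightarrow> (\<forall>i. b$i \<in> \<int>)"

definition unimodular_int :: "real^'n^'n \<Rightarrow> bool" where
  "unimodular_int M \<longleftrightarrow> (\<forall>i j. M$i$j \<in> \<int>) \<and> \<bar>det M\<bar> = 1"

definition unimodular_copy :: "(real^'n) set \<Rightarrow> bool" where
  "unimodular_copy T \<longleftrightarrow>
     (\<exists>M b. unimodular_int M \<and> int_vec b \<and> T = (\<lambda>x. M *v x + b) ` std_simplex)"

definition Delta_free :: "(real^'n) set \<Rightarrow> bool" where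
  "Delta_free C \<longleftrightarrow> \<not> (\<exists>T. unimodular_copy T \<and> T \<subseteq> rel_interior C)"

definition Delta_locked :: "(real^'n) set \<Rightarrow> (real^'n) set \<Rightarrow> bool" where
  "Delta_locked P F \<longleftrightarrow>
     (\<exists>T. unimodular_copy T \<and> T \<subseteq> P \<and> T \<inter> rel_interior F \<noteq> {} \<and>
          {v. v extreme_point_of T} - rel_interior F \<subseteq> interior P)"

definition convex_body :: "(real^'n) set \<Rightarrow> bool" where
  "convex_body K \<longleftrightarrow> compact K \<and> convex K \<and> interior K \<noteq> {}"

end

theory Submission
  imports Defs
begin


locale rep =
  fixes P :: "(real^'n) set" and H :: "(real^'n) set set" and a :: "(real^'n) set \<Rightarrow> real^'n" and b :: "(real^'n) set \<Rightarrow> real"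
  assumes fin: "finite H" and seq: "P = affine hull P \<inter> \<Inter>H"
   and hs: "\<And>h. h\<in>H \<Longrightarrow> a h \<noteq> 0 \<and> h = {x. a h \<bullet> x \<le> b h}"
   and psub: "\<And>F'. F' \<subset> H \<Longrightarrow> P \<subset> affine hull P \<inter> \<Inter>F'"
   and full: "affine hull P = UNIV"
begin

lemma Peq: "P = \<Inter>H" using seq full by auto

lemma memP: "x \<in> P \<longleftrightarrow> (\<forall>h\<in>H. a h \<bullet> x \<le> b h)"
  using Peq hs by auto

lemma open_strict: "G \<subseteq> H \<Longrightarrow> open {x. \<forall>h\<in>G. a h \<bullet> x < b h}"
proof -
  assume "G \<subseteq> H"
  then have fG: "finite G" using fin by (rule finite_subset)
  have eq: "{x. \<forall>h\<in>G. a h \<bullet> x < b h} = (\<Inter>h\<in>G. {x. a h \<bullet> x < b h})" by auto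
  have "open (\<Inter>h\<in>G. {x. a h \<bullet> x < b h})"
    using fG by (intro open_INT ballI open_halfspace_lt)
  then show ?thesis by (simp only: eq)
qed

lemma strict_interior: "(\<forall>h\<in>H. a h \<bullet> x < b h) \<Longrightarrow> x \<in> interior P"
proof -
  assume x: "\<forall>h\<in>H. a h \<bullet> x < b h"
  have "{x. \<forall>h\<in>H. a h \<bullet> x < b h} \<subseteq> P" using memP by (auto intro: less_imp_le)
  then have "interior {x. \<forall>h\<in>H. a h \<bullet> x < b h} \<subseteq> interior P" by (rule interior_mono)
  moreover have "interior {x. \<forall>h\<in>H. a h \<bullet> x < b h} = {x. \<forall>h\<in>H. a h \<bullet> x < b h}"
    using open_strict[of H] by (simp add: interior_open)
  ultimately show ?thesis using x by blast
qed

lemma interior_strict: "x \<in> interior P \<Longrightarrow> (\<forall>h\<in>H. a h \<bullet> x < b h)"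
  using rel_interior_polyhedron_explicit[OF fin seq hs psub] rel_interior_interior[OF full] by auto

lemma facet_iff: "C facet_of P \<longleftrightarrow> (\<exists>h. h \<in> H \<and> C = P \<inter> {x. a h \<bullet> x = b h})"
  by (rule facet_of_polyhedron_explicit[OF fin seq hs psub])

lemma P_ne: "P \<noteq> {}" using full by auto

lemma convP: "convex P" using Peq hs by (metis convex_Inter convex_halfspace_le)

lemma exists_u:
  assumes h: "h \<in> H"
  shows "\<exists>u\<in>P. a h \<bullet> u = b h \<and> (\<forall>h'\<in>H-{h}. a h' \<bullet> u < b h')"
proof -
  have "rel_interior P \<noteq> {}" using P_ne convP rel_interior_eq_empty by blast
  then obtain w where w: "w \<in> interior P" using rel_interior_interior[OF full] by auto
  have ws: "\<forall>h\<in>H. a h \<bullet> w < b h" using interior_strict[OF w] .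
  have "P \<subset> affine hull P \<inter> \<Inter>(H - {h})"
    using psub h by (metis Diff_disjoint Diff_subset insert_disjoint(2) psubsetI)
  then obtain z where zint: "z \<in> \<Inter>(H - {h})" and "z \<notin> P" by force
  have zo: "\<forall>h'\<in>H-{h}. a h' \<bullet> z \<le> b h'" using zint hs by auto
  have zh: "a h \<bullet> z > b h" using zo \<open>z \<notin> P\<close> memP h by (metis DiffI linorder_not_le singletonD)
  define t where "t = (b h - a h \<bullet> w) / (a h \<bullet> z - a h \<bullet> w)"
  have wh: "a h \<bullet> w < b h" using ws h by auto
  have t0: "0 < t" using wh zh by (simp add: t_def)
  have t1: "t < 1" using wh zh by (simp add: t_def divide_less_eq)
  define u where "u = (1 - t) *\<^sub>R w + t *\<^sub>R z"
  have "a h \<bullet> u = a h \<bullet> w + t * (a h \<bullet> z - a h \<bullet> w)"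
    by (simp add: u_def inner_add_right algebra_simps)
  also have "\<dots> = b h" using wh zh by (simp add: t_def)
  finally have uh: "a h \<bullet> u = b h" .
  have uo: "a h' \<bullet> u < b h'" if "h' \<in> H - {h}" for h'
  proof -
    have "a h' \<bullet> u = (1 - t) * (a h' \<bullet> w) + t * (a h' \<bullet> z)" by (simp add: u_def inner_add_right)
    also have "\<dots> < (1 - t) * b h' + t * b h'"
    proof (rule add_less_le_mono)
      show "(1 - t) * (a h' \<bullet> w) < (1 - t) * b h'"
        using ws that t1 by (intro mult_strict_left_mono) auto
      show "t * (a h' \<bullet> z) \<le> t * b h'" using zo that t0 by (intro mult_left_mono) auto
    qed
    finally show ?thesis by (simp add: algebra_simps)
  qed
  have "\<forall>h'\<in>H. a h' \<bullet> u \<le> b h'"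
  proof
    fix h' assume "h' \<in> H"
    then show "a h' \<bullet> u \<le> b h'" using uh uo[of h'] by (cases "h' = h") auto
  qed
  then have "u \<in> P" using memP by blast
  then show ?thesis using uh uo by blast
qed

end


lemma unimod_hull:
  assumes "unimodular_copy (T::(real^'n) set)"
  shows "\<exists>V. finite V \<and> (\<forall>v\<in>V. int_vec v) \<and> T = convex hull V"
proof -
  obtain M c where M: "unimodular_int M" and c: "int_vec c" and T: "T = (\<lambda>x. M *v x + c) ` std_simplex"
    using assms unfolding unimodular_copy_def by blast
  define V0 :: "(real^'n) set" where "V0 = insert 0 (range (\<lambda>i. axis i 1))"
  define V where "V = (\<lambda>x. M *v x + c) ` V0"
  have fV: "finite V" unfolding V_def V0_def by simp
  have "(\<lambda>x. M *v x + c) ` (convex hull V0) = (\<lambda>x. c + x) ` ((\<lambda>x. M *v x) ` (convex hull V0))"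
    by (auto simp: image_image add.commute)
  also have "(\<lambda>x. M *v x) ` (convex hull V0) = convex hull ((\<lambda>x. M *v x) ` V0)"
    by (rule convex_hull_linear_image) simp
  also have "(\<lambda>x. c + x) ` (convex hull ((\<lambda>x. M *v x) ` V0)) = convex hull ((\<lambda>x. c + x) ` ((\<lambda>x. M *v x) ` V0))"
    by (rule convex_hull_translation[symmetric])
  also have "(\<lambda>x. c + x) ` ((\<lambda>x. M *v x) ` V0) = V"
    by (auto simp: V_def image_image add.commute)
  finally have TV: "T = convex hull V" using T by (simp add: std_simplex_def V0_def)
  have iv: "int_vec v" if "v \<in> V" for v
  proof -
    from that obtain x where x: "x \<in> V0" and v: "v = M *v x + c" by (auto simp: V_def)
    show ?thesis
    proof (cases "x = 0")
      case True then show ?thesis using c v by simp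
    next
      case False
      then obtain i where xi: "x = axis i 1" using x by (auto simp: V0_def)
      have "(M *v axis i 1) $ j = M $ j $ i" for j
        by (simp add: matrix_vector_mult_def axis_def if_distrib cong: if_cong)
      then show ?thesis using M c unfolding v xi int_vec_def unimodular_int_def
        by (simp add: Ints_add)
    qed
  qed
  show ?thesis using fV iv TV by blast
qed

lemma unimod_compact_convex:
  assumes "unimodular_copy (T::(real^'n) set)"
  shows "compact T" "convex T" "T = convex hull {v. v extreme_point_of T}"
proof -
  obtain V where "finite V" "T = convex hull V" using unimod_hull[OF assms] by blast
  then show c: "compact T" "convex T" by (auto simp: finite_imp_compact_convex_hull)
  then show "T = convex hull {v. v extreme_point_of T}" by (rule Krein_Milman_Minkowski)
qed

lemma finite_int_pts: "finite {v::real^'n. int_vec v \<and> norm v \<le> R}"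
proof -
  let ?f = "\<lambda>v::real^'n. (\<lambda>i. \<lfloor>v$i\<rfloor>)"
  have inj: "inj_on ?f {v::real^'n. int_vec v \<and> norm v \<le> R}"
  proof (rule inj_onI)
    fix v w assume v: "v \<in> {v::real^'n. int_vec v \<and> norm v \<le> R}" and w: "w \<in> {v::real^'n. int_vec v \<and> norm v \<le> R}"
      and eq: "?f v = ?f w"
    show "v = w"
    proof (rule vec_eq_iff[THEN iffD2], rule allI)
      fix i
      have "v$i \<in> \<int>" "w$i \<in> \<int>" using v w by (auto simp: int_vec_def)
      moreover have "\<lfloor>v$i\<rfloor> = \<lfloor>w$i\<rfloor>" using eq by meson
      ultimately show "v$i = w$i" by (metis Ints_cases floor_of_int)
    qed
  qed
  have sub: "?f ` {v::real^'n. int_vec v \<and> norm v \<le> R} \<subseteq> PiE UNIV (\<lambda>_. {-\<lceil>R\<rceil>..\<lceil>R\<rceil>})"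
  proof
    fix g assume "g \<in> ?f ` {v::real^'n. int_vec v \<and> norm v \<le> R}"
    then obtain v where v: "norm v \<le> R" and g: "g = ?f v" by auto
    have "\<bar>v$i\<bar> \<le> R" for i using component_le_norm_cart[of v i] v by linarith
    have "\<lfloor>v$i\<rfloor> \<in> {-\<lceil>R\<rceil>..\<lceil>R\<rceil>}" for i
    proof -
      have a: "\<bar>v$i\<bar> \<le> R" by fact
      have r1: "real_of_int \<lfloor>v$i\<rfloor> \<le> real_of_int \<lceil>R\<rceil>"
        using a floor_correct[of "v$i"] ceiling_correct[of R] by linarith
      have r2: "real_of_int (-\<lceil>R\<rceil>) < real_of_int (\<lfloor>v$i\<rfloor> + 1)"
        using a floor_correct[of "v$i"] ceiling_correct[of R] by simp linarith
      have "\<lfloor>v$i\<rfloor> \<le> \<lceil>R\<rceil>" using r1 by (simp only: of_int_le_iff)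
      moreover have "-\<lceil>R\<rceil> < \<lfloor>v$i\<rfloor> + 1" using r2 by (simp only: of_int_less_iff)
      ultimately show ?thesis by simp
    qed
    then show "g \<in> PiE UNIV (\<lambda>_. {-\<lceil>R\<rceil>..\<lceil>R\<rceil>})" using g by auto
  qed
  have "finite (PiE (UNIV::'n set) (\<lambda>_. {-\<lceil>R\<rceil>..\<lceil>R\<rceil>}))" by (intro finite_PiE) auto
  then have "finite (?f ` {v::real^'n. int_vec v \<and> norm v \<le> R})" using sub finite_subset by blast
  then show ?thesis using inj finite_imageD by blast
qed



context rep begin

lemma relint_facet:
  assumes h: "h \<in> H" and y: "y \<in> P" "a h \<bullet> y = b h"
  shows "y \<in> rel_interior (P \<inter> {x. a h \<bullet> x = b h}) \<longleftrightarrow> (\<forall>h'\<in>H-{h}. a h' \<bullet> y < b h')"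
proof
  let ?F = "P \<inter> {x. a h \<bullet> x = b h}"
  assume yr: "y \<in> rel_interior ?F"
  show "\<forall>h'\<in>H-{h}. a h' \<bullet> y < b h'"
  proof (rule ccontr)
    assume "\<not> (\<forall>h'\<in>H-{h}. a h' \<bullet> y < b h')"
    then obtain h' where h': "h' \<in> H - {h}" and ge: "\<not> a h' \<bullet> y < b h'" by blast
    have yeq: "a h' \<bullet> y = b h'" using ge y(1) memP h' by force
    let ?G = "P \<inter> {x. a h' \<bullet> x = b h'}"
    have Gf: "?G face_of P"
      using convP memP h' by (intro face_of_Int_supporting_hyperplane_le) auto
    have "?G \<inter> rel_interior ?F \<noteq> {}" using yr yeq y by auto
    then have FG: "?F \<subseteq> ?G" using subset_of_face_of[OF Gf, of ?F] by blast
    obtain u where u: "u \<in> P" "a h \<bullet> u = b h" "\<forall>h'\<in>H-{h}. a h' \<bullet> u < b h'"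
      using exists_u[OF h] by blast
    have "u \<in> ?G" using FG u by blast
    then have "a h' \<bullet> u = b h'" by blast
    moreover have "a h' \<bullet> u < b h'" using u(3) h' by blast
    ultimately show False by simp
  qed
next
  let ?F = "P \<inter> {x. a h \<bullet> x = b h}"
  let ?O = "{x. \<forall>h'\<in>H-{h}. a h' \<bullet> x < b h'}"
  assume st: "\<forall>h'\<in>H-{h}. a h' \<bullet> y < b h'"
  have oO: "open ?O" using open_strict[of "H - {h}"] by blast
  have aff: "affine hull ?F \<subseteq> {x. a h \<bullet> x = b h}"
    by (rule hull_minimal) (auto simp: affine_hyperplane)
  have "?O \<inter> affine hull ?F \<subseteq> ?F"
  proof
    fix z assume z: "z \<in> ?O \<inter> affine hull ?F"
    then have zh: "a h \<bullet> z = b h" using aff by blast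
    have "\<forall>h'\<in>H. a h' \<bullet> z \<le> b h'"
    proof
      fix h' assume "h' \<in> H"
      then show "a h' \<bullet> z \<le> b h'" using z zh by (cases "h' = h") (auto intro: less_imp_le)
    qed
    then show "z \<in> ?F" using memP zh by blast
  qed
  then show "y \<in> rel_interior ?F" unfolding mem_rel_interior using oO st y by blast
qed

end


context rep begin

lemma relint_in_interior:
  assumes K: "convex K" "P \<subseteq> K" and x: "x \<in> K" and h: "h \<in> H" and xh: "a h \<bullet> x > b h"
    and y: "y \<in> rel_interior (P \<inter> {x. a h \<bullet> x = b h})"
  shows "y \<in> interior K"
proof -
  have yF: "y \<in> P" "a h \<bullet> y = b h" using y rel_interior_subset by blast+
  have st: "\<forall>h'\<in>H-{h}. a h' \<bullet> y < b h'" using relint_facet[OF h yF] y by blast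
  let ?O = "{x. \<forall>h'\<in>H-{h}. a h' \<bullet> x < b h'}"
  have "open ?O" using open_strict[of "H - {h}"] by blast
  then obtain d where d: "d > 0" "ball y d \<subseteq> ?O" using st unfolding open_contains_ball by blast
  define t where "t = d / (2 * (norm (y - x) + 1))"
  have "2 * (norm (y - x) + 1) > 0" by (intro mult_pos_pos add_nonneg_pos) auto
  then have t0: "t > 0" using d(1) unfolding t_def by (simp only: divide_pos_pos)
  have "t * norm (y - x) < d"
  proof -
    have "t * norm (y - x) \<le> t * (norm (y - x) + 1)" using t0 by simp
    also have "\<dots> = d / 2"
    proof -
      have nz: "norm (y - x) + 1 \<noteq> 0" by (smt (verit) norm_ge_zero)
      show ?thesis unfolding t_def using nz by (simp add: divide_simps)
    qed
    finally show ?thesis using d by linarith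
  qed
  define p where "p = y + t *\<^sub>R (y - x)"
  have "dist y p < d" using \<open>t * norm (y - x) < d\<close> t0 by (simp add: p_def dist_norm)
  then have pO: "p \<in> ?O" using d by auto
  have "a h \<bullet> p = b h + t * (b h - a h \<bullet> x)"
    by (simp add: p_def inner_add_right inner_diff_right yF(2) algebra_simps)
  also have "\<dots> < b h" using t0 xh by (simp add: mult_pos_neg)
  finally have ph: "a h \<bullet> p < b h" .
  have "\<forall>h'\<in>H. a h' \<bullet> p < b h'"
  proof
    fix h' assume "h' \<in> H" then show "a h' \<bullet> p < b h'" using pO ph by (cases "h' = h") auto
  qed
  then have "p \<in> interior P" by (rule strict_interior)
  then have pK: "p \<in> interior K" using K(2) interior_mono by blast
  define e where "e = 1 / (1 + t)"
  have e0: "0 < e" "e \<le> 1" using t0 by (auto simp: e_def)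
  have "x - e *\<^sub>R (x - p) = y"
  proof -
    have "x - e *\<^sub>R (x - p) = (1 - e * (1 + t)) *\<^sub>R x + (e * (1 + t)) *\<^sub>R y"
      by (simp add: p_def algebra_simps)
    also have "e * (1 + t) = 1" using t0 by (simp add: e_def)
    finally show ?thesis by simp
  qed
  with mem_interior_convex_shrink[OF K(1) pK x e0] show ?thesis by simp
qed

lemma locked_imp_max:
  assumes lock: "\<forall>F. F facet_of P \<longrightarrow> Delta_locked P F"
    and K: "convex_body K" "Delta_free K" "P \<subseteq> K"
  shows "K = P"
proof (rule ccontr)
  assume "K \<noteq> P"
  then obtain x where x: "x \<in> K" "x \<notin> P" using K(3) by blast
  then obtain h where h: "h \<in> H" and xh: "a h \<bullet> x > b h" using memP by force
  let ?F = "P \<inter> {x. a h \<bullet> x = b h}"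
  have "?F facet_of P" using facet_iff h by blast
  then obtain T where T: "unimodular_copy T" "T \<subseteq> P"
    and ext: "{v. v extreme_point_of T} - rel_interior ?F \<subseteq> interior P"
    using lock unfolding Delta_locked_def by blast
  have cK: "convex K" "interior K \<noteq> {}" using K(1) unfolding convex_body_def by auto
  have "{v. v extreme_point_of T} \<subseteq> interior K"
  proof
    fix v assume v: "v \<in> {v. v extreme_point_of T}"
    show "v \<in> interior K"
    proof (cases "v \<in> rel_interior ?F")
      case True then show ?thesis using relint_in_interior[OF cK(1) K(3) x(1) h xh] by blast
    next
      case False then show ?thesis using ext v K(3) interior_mono by blast
    qed
  qed
  then have "convex hull {v. v extreme_point_of T} \<subseteq> interior K"
    using cK(1) by (intro hull_minimal) (auto simp: convex_interior)
  then have "T \<subseteq> rel_interior K"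
    using unimod_compact_convex(3)[OF T(1)] rel_interior_nonempty_interior[OF cK(2)] by simp
  then show False using K(2) T(1) unfolding Delta_free_def by blast
qed

end


context rep begin

lemma closed_le: "closed {x. \<forall>h\<in>G. a h \<bullet> x \<le> b h}"
proof -
  have eq: "{x. \<forall>h\<in>G. a h \<bullet> x \<le> b h} = (\<Inter>h\<in>G. {x. a h \<bullet> x \<le> b h})" by auto
  have "closed (\<Inter>h\<in>G. {x. a h \<bullet> x \<le> b h})" by (intro closed_INT ballI closed_halfspace_le)
  then show ?thesis by (simp only: eq)
qed

lemma convex_le: "convex {x. \<forall>h\<in>G. a h \<bullet> x \<le> b h}"
proof -
  have eq: "{x. \<forall>h\<in>G. a h \<bullet> x \<le> b h} = (\<Inter>h\<in>G. {x. a h \<bullet> x \<le> b h})" by auto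
  have "convex (\<Inter>h\<in>G. {x. a h \<bullet> x \<le> b h})" by (intro convex_INT ballI convex_halfspace_le)
  then show ?thesis by (simp only: eq)
qed

lemma aux2: "(p::real) < q + r \<Longrightarrow> r \<le> (p - q)/2 \<Longrightarrow> 0 < p - q \<Longrightarrow> False" by (simp add: field_simps)

lemma aux1: "(D::real) < D/2 \<Longrightarrow> 0 < D \<Longrightarrow> False" by (simp add: field_simps)

lemma interior_P_ne: "interior P \<noteq> {}"
  using P_ne convP rel_interior_eq_empty rel_interior_interior[OF full] by blast

lemma max_imp_locked:
  assumes bP: "bounded P" and DF: "Delta_free P"
    and max: "\<forall>K. convex_body K \<and> Delta_free K \<and> P \<subseteq> K \<longrightarrow> K = P"
    and h: "h \<in> H"
  shows "Delta_locked P (P \<inter> {x. a h \<bullet> x = b h})"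
proof (rule ccontr)
  let ?F = "P \<inter> {x. a h \<bullet> x = b h}"
  assume NL: "\<not> Delta_locked P ?F"
  have "P \<subset> affine hull P \<inter> \<Inter>(H - {h})"
    using psub h by (metis Diff_disjoint Diff_subset insert_disjoint(2) psubsetI)
  then obtain z where zint: "z \<in> \<Inter>(H - {h})" and "z \<notin> P" by force
  have zo: "\<forall>h'\<in>H-{h}. a h' \<bullet> z \<le> b h'" using zint hs by auto
  have zh: "a h \<bullet> z > b h" using zo \<open>z \<notin> P\<close> memP h by (metis DiffI linorder_not_le singletonD)
  obtain u where u: "u \<in> P" "a h \<bullet> u = b h" "\<forall>h'\<in>H-{h}. a h' \<bullet> u < b h'"
    using exists_u[OF h] by blast
  have "bounded (insert z P)" using bP by simp
  then obtain R where R: "R > 0" "\<forall>x\<in>insert z P. norm x \<le> R" unfolding bounded_pos by blast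
  define K where "K e = cball 0 R \<inter> {x. \<forall>h'\<in>H-{h}. a h' \<bullet> x \<le> b h'} \<inter> {x. a h \<bullet> x \<le> b h + e}" for e
  have PK: "P \<subseteq> K e" if "0 \<le> e" for e
  proof
    fix x assume x: "x \<in> P"
    then have "\<forall>h'\<in>H. a h' \<bullet> x \<le> b h'" using memP by blast
    then show "x \<in> K e" using x R that h by (auto simp: K_def)
  qed
  have Kmono: "K e \<subseteq> K e'" if "e \<le> e'" for e e'
    using that by (auto simp: K_def)
  have intK: "interior (K e) \<subseteq> {x. \<forall>h'\<in>H-{h}. a h' \<bullet> x < b h'} \<inter> {x. a h \<bullet> x < b h + e}" for e
  proof
    fix x assume x: "x \<in> interior (K e)"
    have "a h' \<bullet> x < b h'" if h': "h' \<in> H - {h}" for h'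
    proof -
      have "K e \<subseteq> {x. a h' \<bullet> x \<le> b h'}" using h' by (auto simp: K_def)
      then have "x \<in> interior {x. a h' \<bullet> x \<le> b h'}" using x interior_mono by blast
      moreover have "a h' \<noteq> 0" using hs h' by blast
      ultimately show ?thesis by simp
    qed
    moreover have "a h \<bullet> x < b h + e"
    proof -
      have "K e \<subseteq> {x. a h \<bullet> x \<le> b h + e}" by (auto simp: K_def)
      then have "x \<in> interior {x. a h \<bullet> x \<le> b h + e}" using x interior_mono by blast
      moreover have "a h \<noteq> 0" using hs h by blast
      ultimately show ?thesis by simp
    qed
    ultimately show "x \<in> {x. \<forall>h'\<in>H-{h}. a h' \<bullet> x < b h'} \<inter> {x. a h \<bullet> x < b h + e}" by blast
  qed
  have cb: "convex_body (K e)" if "0 \<le> e" for e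
  proof -
    have "closed ({x. \<forall>h'\<in>H-{h}. a h' \<bullet> x \<le> b h'} \<inter> {x. a h \<bullet> x \<le> b h + e})"
      by (intro closed_Int closed_le closed_halfspace_le)
    then have c1: "compact (K e)" unfolding K_def Int_assoc by (intro compact_Int_closed) auto
    have c2: "convex (K e)" unfolding K_def
      by (intro convex_Int convex_le convex_halfspace_le convex_cball)
    have "interior P \<subseteq> interior (K e)" using PK[OF that] interior_mono by blast
    then have c3: "interior (K e) \<noteq> {}" using interior_P_ne by blast
    show ?thesis using c1 c2 c3 by (simp add: convex_body_def)
  qed
  have key: "\<exists>e. 0 < e \<and> e \<le> 1 \<and> \<not> T \<subseteq> interior (K e)" if T: "unimodular_copy T" for T
  proof (rule ccontr)
    assume "\<not> (\<exists>e. 0 < e \<and> e \<le> 1 \<and> \<not> T \<subseteq> interior (K e))"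
    then have allin: "\<And>e. 0 < e \<Longrightarrow> e \<le> 1 \<Longrightarrow> T \<subseteq> interior (K e)" by blast
    have Tst: "\<forall>h'\<in>H-{h}. a h' \<bullet> x < b h'" if "x \<in> T" for x
      using allin[of 1] intK[of 1] that by auto
    have Th: "a h \<bullet> x \<le> b h" if x: "x \<in> T" for x
    proof (rule ccontr)
      assume "\<not> a h \<bullet> x \<le> b h"
      then have gt: "a h \<bullet> x - b h > 0" by simp
      define e where "e = min 1 ((a h \<bullet> x - b h) / 2)"
      have "0 < e" "e \<le> 1" using gt by (auto simp: e_def)
      then have f1: "a h \<bullet> x < b h + e" using allin intK x by blast
      have f2: "e \<le> (a h \<bullet> x - b h) / 2" unfolding e_def by (rule min.cobounded2)
      show False by (rule aux2[OF f1 f2 gt])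
    qed
    have TP: "T \<subseteq> P"
    proof
      fix x assume x: "x \<in> T"
      have "\<forall>h'\<in>H. a h' \<bullet> x \<le> b h'"
      proof
        fix h' assume "h' \<in> H" then show "a h' \<bullet> x \<le> b h'"
          using Th[OF x] Tst[OF x] by (cases "h' = h") (auto intro: less_imp_le)
      qed
      then show "x \<in> P" using memP by blast
    qed
    have allstrict: "x \<in> interior P" if "x \<in> T" "a h \<bullet> x < b h" for x
    proof (rule strict_interior, rule ballI)
      fix h' assume "h' \<in> H" then show "a h' \<bullet> x < b h'"
        using that Tst[OF that(1)] by (cases "h' = h") auto
    qed
    have "\<not> T \<subseteq> interior P" using DF T rel_interior_interior[OF full] unfolding Delta_free_def by auto
    then obtain x where x: "x \<in> T" "x \<notin> interior P" by blast
    then have xh: "a h \<bullet> x = b h" using Th[OF x(1)] allstrict by force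
    have "x \<in> rel_interior ?F" using relint_facet[OF h _ xh] TP x Tst by blast
    then have meet: "T \<inter> rel_interior ?F \<noteq> {}" using x by blast
    have ext: "{v. v extreme_point_of T} - rel_interior ?F \<subseteq> interior P"
    proof
      fix v assume v: "v \<in> {v. v extreme_point_of T} - rel_interior ?F"
      then have vT: "v \<in> T" by (auto simp: extreme_point_of_def)
      have "a h \<bullet> v \<noteq> b h"
      proof
        assume "a h \<bullet> v = b h"
        then have "v \<in> rel_interior ?F" using relint_facet[OF h] TP vT Tst by blast
        then show False using v by blast
      qed
      then have "a h \<bullet> v < b h" using Th[OF vT] by simp
      then show "v \<in> interior P" using allstrict vT by blast
    qed
    have "Delta_locked P ?F" unfolding Delta_locked_def using T TP meet ext by blast
    then show False using NL by blast
  qed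
  define S where "S = {T. unimodular_copy T \<and> T \<subseteq> K 1}"
  have "S \<subseteq> (\<lambda>V. convex hull V) ` Pow {v. int_vec v \<and> norm v \<le> R}"
  proof
    fix T assume "T \<in> S"
    then have T: "unimodular_copy T" "T \<subseteq> K 1" unfolding S_def by simp_all
    obtain V where V: "finite V" "\<forall>v\<in>V. int_vec v" "T = convex hull V" using unimod_hull[OF T(1)] by blast
    have "V \<subseteq> T" unfolding V(3) by (rule hull_subset)
    then have VK: "V \<subseteq> K 1" using T(2) by (rule order_trans)
    have K1: "norm v \<le> R" if "v \<in> K 1" for v using that by (simp add: K_def)
    have Vsub: "V \<subseteq> {v. int_vec v \<and> norm v \<le> R}"
    proof
      fix v assume "v \<in> V" then show "v \<in> {v. int_vec v \<and> norm v \<le> R}" using VK K1 V(2) by blast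
    qed
    show "T \<in> (\<lambda>V. convex hull V) ` Pow {v. int_vec v \<and> norm v \<le> R}"
    proof (rule image_eqI[where x = V])
      show "T = convex hull V" by (rule V(3))
      show "V \<in> Pow {v. int_vec v \<and> norm v \<le> R}" using Vsub by simp
    qed
  qed
  moreover have "finite ((\<lambda>V. convex hull V) ` Pow {v::real^'n. int_vec v \<and> norm v \<le> R})"
    using finite_int_pts[of R] by (intro finite_imageI) simp
  ultimately have finS: "finite S" by (rule finite_subset)
  have "\<forall>T\<in>S. \<exists>e. 0 < e \<and> e \<le> 1 \<and> \<not> T \<subseteq> interior (K e)" using key by (auto simp: S_def)
  then have "\<exists>eT. \<forall>T\<in>S. 0 < eT T \<and> eT T \<le> 1 \<and> \<not> T \<subseteq> interior (K (eT T))" by (rule bchoice)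
  then obtain eT where eT0: "\<forall>T\<in>S. 0 < eT T \<and> eT T \<le> 1 \<and> \<not> T \<subseteq> interior (K (eT T))" by blast
  have eT: "0 < eT T \<and> eT T \<le> 1 \<and> \<not> T \<subseteq> interior (K (eT T))" if "T \<in> S" for T
    using eT0 that by blast
  define \<epsilon> where "\<epsilon> = Min (insert 1 (eT ` S))"
  have fin: "finite (insert 1 (eT ` S))" using finS by simp
  have e0: "0 < \<epsilon>" unfolding \<epsilon>_def using fin eT by (subst Min_gr_iff) auto
  have e1: "\<epsilon> \<le> 1" unfolding \<epsilon>_def using fin by (intro Min_le) auto
  have eTle: "\<epsilon> \<le> eT T" if "T \<in> S" for T unfolding \<epsilon>_def using fin that by (intro Min_le) auto
  have DFK: "Delta_free (K \<epsilon>)"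
    unfolding Delta_free_def
  proof
    assume "\<exists>T. unimodular_copy T \<and> T \<subseteq> rel_interior (K \<epsilon>)"
    then obtain T where T: "unimodular_copy T" "T \<subseteq> rel_interior (K \<epsilon>)" by blast
    have ne: "interior (K \<epsilon>) \<noteq> {}" using cb[of \<epsilon>] e0 by (simp add: convex_body_def)
    have Ti: "T \<subseteq> interior (K \<epsilon>)" using T(2) rel_interior_nonempty_interior[OF ne] by simp
    then have "T \<subseteq> K 1" using interior_subset Kmono[OF e1] by blast
    then have TS: "T \<in> S" using T(1) by (simp add: S_def)
    have "interior (K \<epsilon>) \<subseteq> interior (K (eT T))" using Kmono[OF eTle[OF TS]] by (rule interior_mono)
    then show False using Ti eT[OF TS] by blast
  qed
  have "convex_body (K \<epsilon>) \<and> Delta_free (K \<epsilon>) \<and> P \<subseteq> K \<epsilon>"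
    using cb[of \<epsilon>] PK[of \<epsilon>] e0 DFK by simp
  then have KP: "K \<epsilon> = P" using max by blast
  define D where "D = a h \<bullet> z - b h"
  have D0: "D > 0" using zh by (simp add: D_def)
  define l where "l = min 1 (\<epsilon> / D)"
  have l0: "0 < l" "l \<le> 1" using e0 D0 by (auto simp: l_def)
  have lD: "l * D \<le> \<epsilon>"
  proof -
    have "l \<le> \<epsilon> / D" unfolding l_def by (rule min.cobounded2)
    then show ?thesis using D0 by (simp add: pos_le_divide_eq)
  qed
  define v where "v = (1 - l) *\<^sub>R u + l *\<^sub>R z"
  have lin: "c \<bullet> v = (1 - l) * (c \<bullet> u) + l * (c \<bullet> z)" for c by (simp add: v_def inner_add_right)
  have vh: "a h \<bullet> v = b h + l * D" using u(2) by (simp add: lin D_def algebra_simps)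
  have vgt: "a h \<bullet> v > b h" using vh l0 D0 by simp
  have "v \<notin> P"
  proof
    assume "v \<in> P" then have "a h \<bullet> v \<le> b h" using memP h by blast
    then show False using vgt by simp
  qed
  moreover have "v \<in> K \<epsilon>"
  proof -
    have "u \<in> cball 0 R" "z \<in> cball 0 R" using R u(1) by auto
    then have vc: "v \<in> cball 0 R" unfolding v_def using l0 by (intro convexD[OF convex_cball]) auto
    have "a h' \<bullet> v \<le> b h'" if h': "h' \<in> H - {h}" for h'
    proof -
      have ul: "a h' \<bullet> u \<le> b h'" using u(3) h' less_imp_le by blast
      have "(1 - l) * (a h' \<bullet> u) \<le> (1 - l) * b h'" using ul l0 by (intro mult_left_mono) auto
      moreover have "l * (a h' \<bullet> z) \<le> l * b h'" using zo h' l0 by (intro mult_left_mono) auto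
      ultimately show ?thesis by (simp add: lin algebra_simps)
    qed
    then show ?thesis using vc vh lD by (auto simp: K_def)
  qed
  ultimately show False using KP by blast
qed

end

theorem proposition4p2:
  fixes P :: "(real^'n) set"
  assumes "polytope P"
    and "aff_dim P = int CARD('n)"
    and "Delta_free P"
  shows "(\<forall>K. convex_body K \<and> Delta_free K \<and> P \<subseteq> K \<longrightarrow> K = P)
         \<longleftrightarrow> (\<forall>F. F facet_of P \<longrightarrow> Delta_locked P F)"
proof -
  have polyh: "polyhedron P" using assms(1) by (rule polytope_imp_polyhedron)
  have bP: "bounded P" using assms(1) by (rule polytope_imp_bounded)
  have full: "affine hull P = UNIV" using assms(2) aff_dim_eq_full[of P] by simp
  obtain H where fin: "finite H" and seq: "P = affine hull P \<inter> \<Inter>H"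
    and hs0: "\<forall>h\<in>H. \<exists>a b. a \<noteq> 0 \<and> h = {x. a \<bullet> x \<le> b}"
    and psub: "\<forall>F'. F' \<subset> H \<longrightarrow> P \<subset> affine hull P \<inter> \<Inter>F'"
    using polyh[unfolded polyhedron_Int_affine_minimal] by (elim exE conjE) blast
  define a where "a h = (SOME a. \<exists>b. a \<noteq> 0 \<and> h = {x. a \<bullet> x \<le> b})" for h :: "(real^'n) set"
  define b where "b h = (SOME b. a h \<noteq> 0 \<and> h = {x. a h \<bullet> x \<le> b})" for h :: "(real^'n) set"
  have hs: "a h \<noteq> 0 \<and> h = {x. a h \<bullet> x \<le> b h}" if "h \<in> H" for h
  proof -
    have "\<exists>a b. a \<noteq> 0 \<and> h = {x. a \<bullet> x \<le> b}" using hs0 that by (rule bspec)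
    then have "\<exists>b. a h \<noteq> 0 \<and> h = {x. a h \<bullet> x \<le> b}"
      unfolding a_def by (rule someI_ex[where P = "\<lambda>a. \<exists>b. a \<noteq> 0 \<and> h = {x. a \<bullet> x \<le> b}"])
    then show ?thesis
      unfolding b_def by (rule someI_ex[where P = "\<lambda>b. a h \<noteq> 0 \<and> h = {x. a h \<bullet> x \<le> b}"])
  qed
  interpret r: rep P H a b
  proof
    show "finite H" by (rule fin)
    show "P = affine hull P \<inter> \<Inter>H" by (rule seq)
    show "a h \<noteq> 0 \<and> h = {x. a h \<bullet> x \<le> b h}" if "h \<in> H" for h using that by (rule hs)
    show "P \<subset> affine hull P \<inter> \<Inter>F'" if "F' \<subset> H" for F' by (rule psub[rule_format, OF that])
    show "affine hull P = UNIV" by (rule full)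
  qed
  show ?thesis
  proof
    assume max: "\<forall>K. convex_body K \<and> Delta_free K \<and> P \<subseteq> K \<longrightarrow> K = P"
    show "\<forall>F. F facet_of P \<longrightarrow> Delta_locked P F"
    proof (intro allI impI)
      fix F assume fF: "F facet_of P"
      have "\<exists>h. h \<in> H \<and> F = P \<inter> {x. a h \<bullet> x = b h}" using r.facet_iff fF by (rule iffD1)
      then obtain h where hF: "h \<in> H \<and> F = P \<inter> {x. a h \<bullet> x = b h}" by (rule exE)
      from hF have h: "h \<in> H" by (rule conjunct1)
      from hF have F: "F = P \<inter> {x. a h \<bullet> x = b h}" by (rule conjunct2)
      show "Delta_locked P F" unfolding F using r.max_imp_locked[OF bP assms(3) max h] .
    qed
  next
    assume lock: "\<forall>F. F facet_of P \<longrightarrow> Delta_locked P F"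
    show "\<forall>K. convex_body K \<and> Delta_free K \<and> P \<subseteq> K \<longrightarrow> K = P"
      using r.locked_imp_max[OF lock] by blast
  qed
qed

end
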